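(* For every sequence $s\in\mathbb Z_{\ge0}^n$, the set of $s$-Tamari trees forms a sublattice of the $s$-weak order.
   Context: Let $s=(s(1),\dots,s(n))\in\mathbb Z_{\ge0}^n$. An $s$-decreasing tree is a planar rooted tree with $n$ internal nodes labeled bijectively by $1,\dots,n$ (leaves unlabeled), the node $i$ having exactly $s(i)+1$ ordered children (subtrees numbered $0,\dots,s(i)$ left to right), labels decreasing from the root. For $a<b$, $\mathrm{card}_T(b,a)$ is $k$ if $a$ lies in the $k$-th child subtree of $b$, $0$ if $a$ is not a descendant of $b$ and lies to the left of $b$, and $s(b)$ if $a$ is not a descendant of $b$ and lies to the right of $b$. The $s$-weak order: $T\le T'$ iff $\mathrm{card}_T(b,a)\le\mathrm{card}_{T'}(b,a)$ for all $a<b$; it is a lattice. An $s$-Tamari tree is an $s$-decreasing tree $T$ with $\mathrm{card}_T(c,a)\le\mathrm{card}_T(c,b)$ for all $1\le a<b<c\le n$. *)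

theory Defs
  imports Main
begin

text \<open>Planar rooted trees: leaves are unlabeled, internal nodes carry a label
and an ordered list of children (child subtrees numbered 0,1,... left to right).\<close>
datatype tr = Leaf | Node nat "tr list"

inductive at :: "tr \<Rightarrow> nat \<Rightarrow> nat list \<Rightarrow> bool" where
  at_root: "at (Node x ts) x []"
| at_child: "i < length ts \<Longrightarrow> at (ts ! i) y p \<Longrightarrow> at (Node x ts) y (i # p)"

fun arity_ok :: "(nat \<Rightarrow> nat) \<Rightarrow> tr \<Rightarrow> bool" where
  "arity_ok s Leaf = True"
| "arity_ok s (Node x ts) = (length ts = s x + 1 \<and> (\<forall>t\<in>set ts. arity_ok s t))"

fun decr :: "tr \<Rightarrow> bool" where
  "decr Leaf = True"
| "decr (Node x ts) =
     (\<forall>t\<in>set ts. decr t \<and> (case t of Leaf \<Rightarrow> True | Node y _ \<Rightarrow> y < x))"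

definition s_decreasing :: "nat \<Rightarrow> (nat \<Rightarrow> nat) \<Rightarrow> tr \<Rightarrow> bool" where
  "s_decreasing n s T \<longleftrightarrow>
     {x. \<exists>p. at T x p} = {1..n} \<and>
     (\<forall>x p q. at T x p \<longrightarrow> at T x q \<longrightarrow> p = q) \<and>
     arity_ok s T \<and> decr T"

definition addr :: "tr \<Rightarrow> nat \<Rightarrow> nat list" where
  "addr T x = (THE p. at T x p)"

definition left_of :: "nat list \<Rightarrow> nat list \<Rightarrow> bool" where
  "left_of pa pb \<longleftrightarrow> (\<exists>c i j u v. i < j \<and> pa = c @ i # u \<and> pb = c @ j # v)"

definition tcard :: "(nat \<Rightarrow> nat) \<Rightarrow> tr \<Rightarrow> nat \<Rightarrow> nat \<Rightarrow> nat" where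
  "tcard s T b a =
     (let pb = addr T b; pa = addr T a in
      if length pb < length pa \<and> take (length pb) pa = pb then pa ! length pb
      else if left_of pa pb then 0 else s b)"

definition s_weak_le :: "nat \<Rightarrow> (nat \<Rightarrow> nat) \<Rightarrow> tr \<Rightarrow> tr \<Rightarrow> bool" where
  "s_weak_le n s T T' \<longleftrightarrow>
     (\<forall>a b. 1 \<le> a \<longrightarrow> a < b \<longrightarrow> b \<le> n \<longrightarrow> tcard s T b a \<le> tcard s T' b a)"

definition s_tamari :: "nat \<Rightarrow> (nat \<Rightarrow> nat) \<Rightarrow> tr \<Rightarrow> bool" where
  "s_tamari n s T \<longleftrightarrow> s_decreasing n s T \<and>
     (\<forall>a b c. 1 \<le> a \<longrightarrow> a < b \<longrightarrow> b < c \<longrightarrow> c \<le> n \<longrightarrow> tcard s T c a \<le> tcard s T c b)"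

definition is_s_join :: "nat \<Rightarrow> (nat \<Rightarrow> nat) \<Rightarrow> tr \<Rightarrow> tr \<Rightarrow> tr \<Rightarrow> bool" where
  "is_s_join n s T T' J \<longleftrightarrow> s_decreasing n s J \<and> s_weak_le n s T J \<and> s_weak_le n s T' J \<and>
     (\<forall>U. s_decreasing n s U \<longrightarrow> s_weak_le n s T U \<longrightarrow> s_weak_le n s T' U \<longrightarrow> s_weak_le n s J U)"

definition is_s_meet :: "nat \<Rightarrow> (nat \<Rightarrow> nat) \<Rightarrow> tr \<Rightarrow> tr \<Rightarrow> tr \<Rightarrow> bool" where
  "is_s_meet n s T T' M \<longleftrightarrow> s_decreasing n s M \<and> s_weak_le n s M T \<and> s_weak_le n s M T' \<and>
     (\<forall>U. s_decreasing n s U \<longrightarrow> s_weak_le n s U T \<longrightarrow> s_weak_le n s U T' \<longrightarrow> s_weak_le n s U M)"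

end

theory Submission
  imports Defs
begin


lemma left_ofI: "i < j \<Longrightarrow> left_of (c @ i # u) (c @ j # v)"
  unfolding left_of_def by blast

lemma left_of_ext: "left_of p q \<Longrightarrow> left_of (p @ x) (q @ y)"
  unfolding left_of_def by fastforce

lemma left_of_Cons: "left_of (i # p) (i # q) \<longleftrightarrow> left_of p q"
proof
  assume "left_of (i # p) (i # q)"
  then obtain c k j u v where h: "k < j" "i # p = c @ k # u" "i # q = c @ j # v"
    unfolding left_of_def by blast
  show "left_of p q"
  proof (cases c)
    case Nil then show ?thesis using h by simp
  next
    case (Cons x c') then show ?thesis using h unfolding left_of_def by auto
  qed
next
  assume "left_of p q" then show "left_of (i # p) (i # q)"
    unfolding left_of_def by (metis append_Cons)
qed

lemma left_of_Nil1[simp]: "\<not> left_of [] q" unfolding left_of_def by simp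
lemma left_of_Nil2[simp]: "\<not> left_of p []" unfolding left_of_def by simp

lemma left_of_Cons2: "left_of (i # p) (j # q) \<longleftrightarrow> i < j \<or> (i = j \<and> left_of p q)"
proof (cases "i = j")
  case True then show ?thesis using left_of_Cons by simp
next
  case False
  have "left_of (i # p) (j # q) \<longleftrightarrow> i < j"
  proof
    assume "left_of (i # p) (j # q)"
    then obtain c k l u v where h: "k < l" "i # p = c @ k # u" "j # q = c @ l # v"
      unfolding left_of_def by blast
    show "i < j" using h False by (cases c) auto
  next
    assume "i < j" then show "left_of (i # p) (j # q)" using left_ofI[of i j "[]"] by simp
  qed
  then show ?thesis using False by simp
qed

lemma left_of_trans: "left_of p q \<Longrightarrow> left_of q r \<Longrightarrow> left_of p r"
proof (induction p arbitrary: q r)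
  case Nil then show ?case by simp
next
  case (Cons i p)
  then obtain j q' where q: "q = j # q'" by (cases q) auto
  then obtain k r' where r: "r = k # r'" using Cons by (cases r) auto
  show ?case using Cons q r by (auto simp: left_of_Cons2)
qed

lemma left_of_asym: "left_of p q \<Longrightarrow> \<not> left_of q p"
proof (induction p arbitrary: q)
  case Nil then show ?case by simp
next
  case (Cons i p)
  then obtain j q' where q: "q = j # q'" by (cases q) auto
  show ?case using Cons q by (auto simp: left_of_Cons2)
qed

lemma left_of_not_prefix: "left_of p q \<Longrightarrow> \<not> (\<exists>r. q = p @ r) \<and> \<not> (\<exists>r. p = q @ r)"
proof (induction p arbitrary: q)
  case Nil then show ?case by simp
next
  case (Cons i p)
  then obtain j q' where q: "q = j # q'" by (cases q) auto
  show ?case using Cons q by (auto simp: left_of_Cons2)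
qed

lemma trich: "(\<exists>r. q = p @ r) \<or> (\<exists>r. p = q @ r) \<or> left_of p q \<or> left_of q p"
proof (induction p arbitrary: q)
  case Nil then show ?case by simp
next
  case (Cons i p)
  show ?case
  proof (cases q)
    case Nil then show ?thesis by simp
  next
    case (Cons j q')
    then show ?thesis using Cons.IH[of q'] by (cases "i = j") (auto simp: left_of_Cons2 linorder_neq_iff)
  qed
qed

definition cls :: "nat \<Rightarrow> nat list \<Rightarrow> nat list \<Rightarrow> nat" where
  "cls S pb pa = (if length pb < length pa \<and> take (length pb) pa = pb then pa ! length pb
      else if left_of pa pb then 0 else S)"

lemma prefix_conv: "(length pb < length pa \<and> take (length pb) pa = pb) \<longleftrightarrow> (\<exists>j v. pa = pb @ j # v)"
proof
  assume h: "length pb < length pa \<and> take (length pb) pa = pb"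
  then have "pa = pb @ drop (length pb) pa" by (metis append_take_drop_id)
  moreover have "drop (length pb) pa \<noteq> []" using h by simp
  ultimately show "\<exists>j v. pa = pb @ j # v" by (metis list.exhaust)
qed auto

lemma cls_sub: "p = pm @ j # v \<Longrightarrow> cls S pm p = j"
  unfolding cls_def by simp

lemma cls_left: "left_of p pm \<Longrightarrow> cls S pm p = 0"
proof -
  assume h: "left_of p pm"
  have "\<not> (\<exists>j v. p = pm @ j # v)" using left_of_not_prefix[OF h] by blast
  then show ?thesis unfolding cls_def prefix_conv using h by simp
qed

lemma cls_right: "left_of pm p \<Longrightarrow> cls S pm p = S"
proof -
  assume h: "left_of pm p"
  have "\<not> (\<exists>j v. p = pm @ j # v)" using left_of_not_prefix[OF h] by blast
  then show ?thesis unfolding cls_def prefix_conv using left_of_asym[OF h] by simp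
qed

lemma cls_cases:
  assumes "\<not> (\<exists>r. pm = p @ r)"
  shows "(\<exists>j v. p = pm @ j # v \<and> cls S pm p = j) \<or> (left_of p pm \<and> cls S pm p = 0)
       \<or> (left_of pm p \<and> cls S pm p = S)"
proof -
  have "(\<exists>r. p = pm @ r) \<or> left_of p pm \<or> left_of pm p" using trich[of pm p] assms by (elim disjE) simp_all
  moreover have "(\<exists>r. p = pm @ r) \<Longrightarrow> \<exists>j v. p = pm @ j # v"
  proof -
    assume "\<exists>r. p = pm @ r"
    then obtain r where r: "p = pm @ r" by blast
    have "r \<noteq> []" using r assms by auto
    then obtain j v where "r = j # v" by (cases r) auto
    then show ?thesis using r by blast
  qed
  ultimately show ?thesis
  proof (elim disjE)
    assume "\<exists>r. p = pm @ r"
    then obtain j v where "p = pm @ j # v" using \<open>(\<exists>r. p = pm @ r) \<Longrightarrow> \<exists>j v. p = pm @ j # v\<close> by blast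
    then show ?thesis using cls_sub by blast
  qed (simp_all add: cls_left cls_right)
qed

lemma P3_lists:
  assumes nab: "\<not>(\<exists>r. pb = pa @ r)" and nam: "\<not>(\<exists>r. pm = pa @ r)" and nbm: "\<not>(\<exists>r. pm = pb @ r)"
    and ra: "\<And>j v. pa = pm @ j # v \<Longrightarrow> j \<le> S" and rb: "\<And>j v. pb = pm @ j # v \<Longrightarrow> j \<le> S"
  shows "cls S pm pa < cls S pm pb \<Longrightarrow> left_of pa pb"
    and "cls S pm pb < cls S pm pa \<Longrightarrow> left_of pb pa"
proof -
  note A = cls_cases[OF nam, of S] and B = cls_cases[OF nbm, of S]
  show "cls S pm pa < cls S pm pb \<Longrightarrow> left_of pa pb"
  proof -
    assume lt: "cls S pm pa < cls S pm pb"
    from A show ?thesis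
    proof (elim disjE exE conjE)
      fix i u assume a: "pa = pm @ i # u" "cls S pm pa = i"
      from B show ?thesis
      proof (elim disjE exE conjE)
        fix j v assume b: "pb = pm @ j # v" "cls S pm pb = j"
        then show ?thesis using a lt left_ofI[of i j pm u v] by simp
      next
        assume "left_of pb pm" "cls S pm pb = 0" then show ?thesis using lt by simp
      next
        assume "left_of pm pb" "cls S pm pb = S"
        then show ?thesis using a left_of_ext[of pm pb "i#u" "[]"] by simp
      qed
    next
      assume a: "left_of pa pm" "cls S pm pa = 0"
      from B show ?thesis
      proof (elim disjE exE conjE)
        fix j v assume b: "pb = pm @ j # v" "cls S pm pb = j"
        then show ?thesis using a left_of_ext[of pa pm "[]" "j#v"] by simp
      next
        assume "left_of pb pm" "cls S pm pb = 0" then show ?thesis using lt by simp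
      next
        assume "left_of pm pb" "cls S pm pb = S"
        then show ?thesis using a left_of_trans by blast
      qed
    next
      assume a: "left_of pm pa" "cls S pm pa = S"
      from B show ?thesis
      proof (elim disjE exE conjE)
        fix j v assume b: "pb = pm @ j # v" "cls S pm pb = j"
        then show ?thesis using a lt rb[OF b(1)] by simp
      next
        assume "left_of pb pm" "cls S pm pb = 0" then show ?thesis using lt by simp
      next
        assume "left_of pm pb" "cls S pm pb = S"
        then show ?thesis using a lt by simp
      qed
    qed
  qed
  show "cls S pm pb < cls S pm pa \<Longrightarrow> left_of pb pa"
  proof -
    assume lt: "cls S pm pb < cls S pm pa"
    from B show ?thesis
    proof (elim disjE exE conjE)
      fix i u assume b: "pb = pm @ i # u" "cls S pm pb = i"
      from A show ?thesis
      proof (elim disjE exE conjE)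
        fix j v assume a: "pa = pm @ j # v" "cls S pm pa = j"
        then show ?thesis using b lt left_ofI[of i j pm u v] by simp
      next
        assume "left_of pa pm" "cls S pm pa = 0" then show ?thesis using lt by simp
      next
        assume "left_of pm pa" "cls S pm pa = S"
        then show ?thesis using b left_of_ext[of pm pa "i#u" "[]"] by simp
      qed
    next
      assume b: "left_of pb pm" "cls S pm pb = 0"
      from A show ?thesis
      proof (elim disjE exE conjE)
        fix j v assume a: "pa = pm @ j # v" "cls S pm pa = j"
        then show ?thesis using b left_of_ext[of pb pm "[]" "j#v"] by simp
      next
        assume "left_of pa pm" "cls S pm pa = 0" then show ?thesis using lt by simp
      next
        assume "left_of pm pa" "cls S pm pa = S"
        then show ?thesis using b left_of_trans by blast
      qed
    next
      assume b: "left_of pm pb" "cls S pm pb = S"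
      from A show ?thesis
      proof (elim disjE exE conjE)
        fix j v assume a: "pa = pm @ j # v" "cls S pm pa = j"
        then show ?thesis using b lt ra[OF a(1)] by simp
      next
        assume "left_of pa pm" "cls S pm pa = 0" then show ?thesis using lt by simp
      next
        assume "left_of pm pa" "cls S pm pa = S"
        then show ?thesis using b lt by simp
      qed
    qed
  qed
qed



inductive_simps at_Node_simp: "at (Node x ts) y p"
inductive_simps at_Leaf_simp[simp]: "at Leaf y p"

lemma at_Nil[simp]: "at T y [] \<longleftrightarrow> (\<exists>ts. T = Node y ts)"
  by (cases T) (auto simp: at_Node_simp)

lemma at_Cons[simp]: "at T y (i # p) \<longleftrightarrow> (\<exists>x ts. T = Node x ts \<and> i < length ts \<and> at (ts ! i) y p)"
  by (cases T) (auto simp: at_Node_simp)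

lemma at_det: "at T x p \<Longrightarrow> at T y p \<Longrightarrow> x = y"
  by (induction p arbitrary: T) auto

lemma decr_le: "decr t \<Longrightarrow> at t y q \<Longrightarrow> t = Node z ts \<Longrightarrow> y \<le> z"
proof (induction q arbitrary: t z ts)
  case Nil then show ?case by simp
next
  case (Cons i q)
  then have i: "i < length ts" "at (ts ! i) y q" by auto
  have "ts ! i \<in> set ts" using i by simp
  then have d: "decr (ts ! i)" and c: "case ts ! i of Leaf \<Rightarrow> True | Node y' _ \<Rightarrow> y' < z"
    using Cons.prems by auto
  obtain z' ts' where e: "ts ! i = Node z' ts'" using i(2) by (cases "ts ! i") auto
  have "y \<le> z'" using Cons.IH[OF d i(2) e] .
  then show ?case using c e by simp
qed

lemma decr_lt: "decr T \<Longrightarrow> at T x p \<Longrightarrow> at T y (p @ q) \<Longrightarrow> q \<noteq> [] \<Longrightarrow> y < x"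
proof (induction p arbitrary: T)
  case Nil
  then obtain ts where T: "T = Node x ts" by auto
  obtain i q' where q: "q = i # q'" using Nil by (cases q) auto
  then have i: "i < length ts" "at (ts ! i) y q'" using Nil T by auto
  have "ts ! i \<in> set ts" using i by simp
  then have d: "decr (ts ! i)" and c: "case ts ! i of Leaf \<Rightarrow> True | Node y' _ \<Rightarrow> y' < x"
    using Nil T by auto
  obtain z' ts' where e: "ts ! i = Node z' ts'" using i(2) by (cases "ts ! i") auto
  have "y \<le> z'" using decr_le[OF d i(2) e] .
  then show ?case using c e by simp
next
  case (Cons i p)
  then obtain z ts where T: "T = Node z ts" "i < length ts" "at (ts ! i) x p" by auto
  have "at (ts ! i) y (p @ q)" using Cons.prems T by auto
  moreover have "decr (ts ! i)" using Cons.prems T by auto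
  ultimately show ?case using Cons.IH T Cons.prems by blast
qed

lemma arity_lt: "arity_ok s T \<Longrightarrow> at T x p \<Longrightarrow> at T y (p @ j # v) \<Longrightarrow> j \<le> s x"
proof (induction p arbitrary: T)
  case Nil
  then obtain ts where T: "T = Node x ts" by auto
  then show ?case using Nil by auto
next
  case (Cons i p)
  then obtain z ts where T: "T = Node z ts" "i < length ts" "at (ts ! i) x p" by auto
  have "at (ts ! i) y (p @ j # v)" using Cons.prems T by auto
  moreover have "arity_ok s (ts ! i)" using Cons.prems T by auto
  ultimately show ?case using Cons.IH T Cons.prems by blast
qed

lemma addr_eq: "(\<forall>p q. at T x p \<longrightarrow> at T x q \<longrightarrow> p = q) \<Longrightarrow> at T x p \<Longrightarrow> addr T x = p"
  unfolding addr_def by blast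

lemma tcard_cls: "tcard s T b a = cls (s b) (addr T b) (addr T a)"
  unfolding tcard_def cls_def Let_def by simp

lemma sdec_at:
  assumes "s_decreasing n s T" "1 \<le> x" "x \<le> n"
  shows "at T x (addr T x)"
proof -
  have "x \<in> {x. \<exists>p. at T x p}" using assms unfolding s_decreasing_def by auto
  then obtain p where "at T x p" by blast
  then show ?thesis using addr_eq assms(1) unfolding s_decreasing_def by metis
qed

definition valid :: "nat \<Rightarrow> (nat \<Rightarrow> nat) \<Rightarrow> (nat \<Rightarrow> nat \<Rightarrow> nat) \<Rightarrow> bool" where
  "valid n s f \<longleftrightarrow> (\<forall>a b. 1 \<le> a \<longrightarrow> a < b \<longrightarrow> b \<le> n \<longrightarrow> f b a \<le> s b) \<and>
     (\<forall>a b m. 1 \<le> a \<longrightarrow> a < b \<longrightarrow> b < m \<longrightarrow> m \<le> n \<longrightarrow>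
        (f m a < f m b \<longrightarrow> f b a = 0) \<and> (f m b < f m a \<longrightarrow> f b a = s b))"

lemma tree_valid:
  assumes T: "s_decreasing n s T"
  shows "valid n s (tcard s T)"
proof -
  have ar: "arity_ok s T" and de: "decr T" using T unfolding s_decreasing_def by auto
  have atx: "\<And>x. 1 \<le> x \<Longrightarrow> x \<le> n \<Longrightarrow> at T x (addr T x)" using sdec_at[OF T] .
  have np: "\<not> (\<exists>r. addr T y = addr T x @ r)" if "1 \<le> x" "x < y" "y \<le> n" for x y
  proof
    assume "\<exists>r. addr T y = addr T x @ r"
    then obtain r where r: "addr T y = addr T x @ r" by blast
    show False
    proof (cases "r = []")
      case True
      then have "x = y" using at_det[OF atx[of x] ] atx[of y] r that by simp
      then show False using that by simp
    next
      case False
      then have "y < x" using decr_lt[OF de atx[of x]] atx[of y] r that by simp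
      then show False using that by simp
    qed
  qed
  have rg: "j \<le> s x" if "1 \<le> x" "x \<le> n" "1 \<le> y" "y \<le> n" "addr T y = addr T x @ j # v" for x y j v
    using arity_lt[OF ar atx[of x]] atx[of y] that by simp
  show ?thesis unfolding valid_def
  proof (intro conjI allI impI)
    fix a b assume h: "1 \<le> a" "a < b" "b \<le> n"
    show "tcard s T b a \<le> s b"
      unfolding tcard_cls using cls_cases[OF np[of a b], of "s b"] rg[of b a] h by auto
  next
    fix a b m assume h: "1 \<le> a" "a < b" "b < m" "m \<le> n"
    have n1: "\<not> (\<exists>r. addr T b = addr T a @ r)" using np[of a b] h by simp
    have n2: "\<not> (\<exists>r. addr T m = addr T a @ r)" using np[of a m] h by simp
    have n3: "\<not> (\<exists>r. addr T m = addr T b @ r)" using np[of b m] h by simp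
    note P = P3_lists[OF n1 n2 n3, of "s m"]
    have r1: "\<And>j v. addr T a = addr T m @ j # v \<Longrightarrow> j \<le> s m" using rg[of m a] h by simp
    have r2: "\<And>j v. addr T b = addr T m @ j # v \<Longrightarrow> j \<le> s m" using rg[of m b] h by simp
    show "tcard s T b a = 0" if "tcard s T m a < tcard s T m b"
      using that
      using P(1)[OF r1 r2] h cls_left unfolding tcard_cls by simp
    show "tcard s T b a = s b" if "tcard s T m b < tcard s T m a"
      using that
      using P(2)[OF r1 r2] h cls_right unfolding tcard_cls by simp
  qed
qed



function build :: "(nat \<Rightarrow> nat) \<Rightarrow> (nat \<Rightarrow> nat \<Rightarrow> nat) \<Rightarrow> nat set \<Rightarrow> tr" where
  "build s f L = (if L = {} \<or> \<not> finite L then Leaf else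
     Node (Max L) (map (\<lambda>i. build s f {a \<in> L. a \<noteq> Max L \<and> f (Max L) a = i}) [0..<Suc (s (Max L))]))"
  by pat_completeness auto
termination
proof (relation "measure (\<lambda>(s, f, L). card L)")
  fix s f i and L :: "nat set"
  assume h: "\<not> (L = {} \<or> \<not> finite L)"
  then have "Max L \<in> L" by simp
  then have "{a \<in> L. a \<noteq> Max L \<and> f (Max L) a = i} \<subset> L" by blast
  then show "((s, f, {a \<in> L. a \<noteq> Max L \<and> f (Max L) a = i}), s, f, L) \<in> measure (\<lambda>(s, f, L). card L)"
    using h psubset_card_mono by auto
qed auto

declare build.simps[simp del]

lemma build_ne: "finite L \<Longrightarrow> L \<noteq> {} \<Longrightarrow> build s f L =
     Node (Max L) (map (\<lambda>i. build s f {a \<in> L. a \<noteq> Max L \<and> f (Max L) a = i}) [0..<Suc (s (Max L))])"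
  by (subst build.simps) simp

lemma build_e: "build s f {} = Leaf"
  by (subst build.simps) simp

lemma at_build_Nil: "at (build s f L) x [] \<longleftrightarrow> (finite L \<and> L \<noteq> {} \<and> x = Max L)"
  by (subst build.simps) auto

lemma at_build_Cons: "at (build s f L) x (i # r) \<longleftrightarrow> (finite L \<and> L \<noteq> {} \<and> i < Suc (s (Max L)) \<and>
    at (build s f {a \<in> L. a \<noteq> Max L \<and> f (Max L) a = i}) x r)"
  by (subst build.simps) (auto simp del: upt_Suc)

declare at_Cons[simp del] at_Nil[simp del]

lemma at_build_in: "at (build s f L) x p \<Longrightarrow> x \<in> L"
proof (induction s f L arbitrary: p rule: build.induct)
  case (1 s f L)
  show ?case
  proof (cases p)
    case Nil then show ?thesis using 1(2) at_build_Nil by simp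
  next
    case (Cons i q)
    then have "at (build s f {a \<in> L. a \<noteq> Max L \<and> f (Max L) a = i}) x q" "finite L" "L \<noteq> {}"
      "i < Suc (s (Max L))"
      using 1(2) at_build_Cons by auto
    moreover have "i \<in> set [0..<Suc (s (Max L))]" using \<open>i < Suc (s (Max L))\<close> by (simp del: upt_Suc)
    ultimately have "x \<in> {a \<in> L. a \<noteq> Max L \<and> f (Max L) a = i}" using 1(1)[of i q] by blast
    then show ?thesis by simp
  qed
qed

lemma at_build_ex: "finite L \<Longrightarrow> (\<forall>a\<in>L. \<forall>b\<in>L. a < b \<longrightarrow> f b a \<le> s b) \<Longrightarrow> x \<in> L \<Longrightarrow>
   \<exists>p. at (build s f L) x p"
proof (induction s f L rule: build.induct)
  case (1 s f L)
  then have ne: "L \<noteq> {}" by auto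
  show ?case
  proof (cases "x = Max L")
    case True then show ?thesis using ne 1(2) at_build_Nil by blast
  next
    case False
    define i where "i = f (Max L) x"
    have "x < Max L" using False 1 by (simp add: order.not_eq_order_implies_strict)
    moreover have "Max L \<in> L" using ne 1(2) by simp
    ultimately have il: "i < Suc (s (Max L))" using 1(3,4) unfolding i_def by fastforce
    have "x \<in> {a \<in> L. a \<noteq> Max L \<and> f (Max L) a = i}" using False 1(4) i_def by simp
    moreover have "i \<in> set [0..<Suc (s (Max L))]" using il by (simp del: upt_Suc)
    moreover have "\<not> (L = {} \<or> \<not> finite L)" using ne 1(2) by simp
    moreover have "finite {a \<in> L. a \<noteq> Max L \<and> f (Max L) a = i}" using 1(2) by simp
    moreover have "\<forall>a\<in>{a \<in> L. a \<noteq> Max L \<and> f (Max L) a = i}. \<forall>b\<in>{a \<in> L. a \<noteq> Max L \<and> f (Max L) a = i}. a < b \<longrightarrow> f b a \<le> s b"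
      using 1(3) by blast
    ultimately obtain q where "at (build s f {a \<in> L. a \<noteq> Max L \<and> f (Max L) a = i}) x q"
      using 1(1)[of i] by blast
    then show ?thesis using il ne 1(2) at_build_Cons by blast
  qed
qed

lemma at_build_uniq: "at (build s f L) x p \<Longrightarrow> at (build s f L) x q \<Longrightarrow> p = q"
proof (induction s f L arbitrary: p q rule: build.induct)
  case (1 s f L)
  let ?G = "\<lambda>i. {a \<in> L. a \<noteq> Max L \<and> f (Max L) a = i}"
  have ch: "\<And>x i r. at (build s f L) x (i # r) \<Longrightarrow> finite L \<and> L \<noteq> {} \<and> i < Suc (s (Max L)) \<and> at (build s f (?G i)) x r \<and> x \<in> ?G i"
  proof -
    fix x i r assume h: "at (build s f L) x (i # r)"
    then have "finite L \<and> L \<noteq> {} \<and> i < Suc (s (Max L)) \<and> at (build s f (?G i)) x r"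
      using at_build_Cons[of s f L x i r] by blast
    moreover then have "x \<in> ?G i" using at_build_in by blast
    ultimately show "finite L \<and> L \<noteq> {} \<and> i < Suc (s (Max L)) \<and> at (build s f (?G i)) x r \<and> x \<in> ?G i" by blast
  qed
  show ?case
  proof (cases p)
    case Nil
    then have "x = Max L" using 1(2) at_build_Nil by simp
    then show ?thesis using ch 1(3) Nil by (cases q) auto
  next
    case (Cons i p')
    show ?thesis
    proof (cases q)
      case Nil
      then have "x = Max L" using 1(3) at_build_Nil by simp
      then show ?thesis using ch 1(2) Cons by auto
    next
      case (Cons j q')
      have "f (Max L) x = i" using ch[of x i p'] 1(2) \<open>p = i # p'\<close> by blast
      moreover have "f (Max L) x = j" using ch[of x j q'] 1(3) Cons by blast
      ultimately have "i = j" by simp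
      have "i < Suc (s (Max L))" "finite L" "L \<noteq> {}" using ch[of x i p'] 1(2) \<open>p = i # p'\<close> by blast+
      then have "i \<in> set [0..<Suc (s (Max L))]" "\<not> (L = {} \<or> \<not> finite L)" by (simp_all del: upt_Suc)
      moreover have "at (build s f {a \<in> L. a \<noteq> Max L \<and> f (Max L) a = i}) x p'"
          "at (build s f {a \<in> L. a \<noteq> Max L \<and> f (Max L) a = i}) x q'"
        using ch[of x i p'] ch[of x j q'] 1(2,3) \<open>p = i # p'\<close> Cons \<open>i = j\<close> by blast+
      ultimately have "p' = q'" using 1(1)[of i p' q'] by blast
      then show ?thesis using \<open>p = i # p'\<close> Cons \<open>i = j\<close> by simp
    qed
  qed
qed

lemma arity_build: "arity_ok s (build s f L)"
proof (induction s f L rule: build.induct)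
  case (1 s f L)
  show ?case
  proof (cases "L = {} \<or> \<not> finite L")
    case True then show ?thesis by (subst build.simps) simp
  next
    case False
    then show ?thesis using 1 build_ne[of L s f] by (auto simp del: upt_Suc)
  qed
qed

lemma build_Node: "build s f L = Node y ts \<Longrightarrow> finite L \<and> L \<noteq> {} \<and> y = Max L"
  by (subst (asm) build.simps) (auto split: if_splits)

lemma decr_build: "decr (build s f L)"
proof (induction s f L rule: build.induct)
  case (1 s f L)
  show ?case
  proof (cases "L = {} \<or> \<not> finite L")
    case True then show ?thesis by (subst build.simps) simp
  next
    case False
    let ?G = "\<lambda>i. {a \<in> L. a \<noteq> Max L \<and> f (Max L) a = i}"
    have "\<And>i. (case build s f (?G i) of Leaf \<Rightarrow> True | Node y _ \<Rightarrow> y < Max L)"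
    proof -
      fix i
      show "(case build s f (?G i) of Leaf \<Rightarrow> True | Node y _ \<Rightarrow> y < Max L)"
      proof (cases "build s f (?G i)")
        case Leaf then show ?thesis by simp
      next
        case (Node y ts)
        have h: "finite (?G i) \<and> ?G i \<noteq> {} \<and> y = Max (?G i)" by (rule build_Node[OF Node])
        then have "y \<in> ?G i" using Max_in[of "?G i"] by simp
        then have "y \<le> Max L" "y \<noteq> Max L" using False by simp_all
        then have "y < Max L" by simp
        then show ?thesis using Node by simp
      qed
    qed
    moreover have "\<And>i. i \<in> set [0..<Suc (s (Max L))] \<Longrightarrow> decr (build s f (?G i))"
      using 1 False by blast
    ultimately have "\<forall>t\<in>set (map (\<lambda>i. build s f (?G i)) [0..<Suc (s (Max L))]). decr t \<and>
       (case t of Leaf \<Rightarrow> True | Node y _ \<Rightarrow> y < Max L)" by (simp only: set_map) blast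
    moreover have "build s f L = Node (Max L) (map (\<lambda>i. build s f (?G i)) [0..<Suc (s (Max L))])"
      using False build_ne[of L s f] by blast
    ultimately show ?thesis by (simp only: decr.simps)
  qed
qed

lemma cls_Cons: "cls S (i # pb) (i # pa) = cls S pb pa"
proof -
  have e: "(\<exists>j v. i # pa = (i # pb) @ j # v) \<longleftrightarrow> (\<exists>j v. pa = pb @ j # v)" by simp
  show ?thesis unfolding cls_def prefix_conv e by (simp add: left_of_Cons)
qed

lemma cls_build:
  assumes "\<forall>a\<in>L. \<forall>b\<in>L. \<forall>m\<in>L. a < b \<longrightarrow> b < m \<longrightarrow>
        (f m a < f m b \<longrightarrow> f b a = 0) \<and> (f m b < f m a \<longrightarrow> f b a = s b)"
    "a < b" "at (build s f L) a pa" "at (build s f L) b pb"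
  shows "cls (s b) pb pa = f b a"
  using assms
proof (induction s f L arbitrary: pa pb rule: build.induct)
  case (1 s f L)
  let ?G = "\<lambda>i. {a \<in> L. a \<noteq> Max L \<and> f (Max L) a = i}"
  have ch: "\<And>x i r. at (build s f L) x (i # r) \<Longrightarrow> finite L \<and> L \<noteq> {} \<and> i < Suc (s (Max L)) \<and> at (build s f (?G i)) x r \<and> x \<in> ?G i"
  proof -
    fix x i r assume h: "at (build s f L) x (i # r)"
    then have "finite L \<and> L \<noteq> {} \<and> i < Suc (s (Max L)) \<and> at (build s f (?G i)) x r"
      using at_build_Cons[of s f L x i r] by blast
    moreover then have "x \<in> ?G i" using at_build_in by blast
    ultimately show "finite L \<and> L \<noteq> {} \<and> i < Suc (s (Max L)) \<and> at (build s f (?G i)) x r \<and> x \<in> ?G i" by blast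
  qed
  have aL: "a \<in> L" and bL: "b \<in> L" using at_build_in "1.prems" by blast+
  have fin: "finite L" using bL at_build_Cons at_build_Nil "1.prems"(4) by (cases pb) auto
  have aM: "a \<noteq> Max L" using aL bL fin "1.prems"(2) by (meson Max_ge leD)
  obtain i u where pa: "pa = i # u" using "1.prems"(3) aM at_build_Nil by (cases pa) auto
  have ai: "at (build s f (?G i)) a u" "a \<in> ?G i" using ch "1.prems"(3) pa by auto
  show ?case
  proof (cases "b = Max L")
    case True
    then have "pb = []" using at_build_uniq[OF "1.prems"(4)] at_build_Nil fin bL by blast
    then show ?thesis using pa ai True unfolding cls_def by simp
  next
    case False
    obtain j v where pb: "pb = j # v" using "1.prems"(4) False at_build_Nil by (cases pb) auto
    have bj: "at (build s f (?G j)) b v" "b \<in> ?G j" using ch "1.prems"(4) pb by auto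
    have bM: "b < Max L" using False bL fin by (simp add: order.not_eq_order_implies_strict)
    have MxL: "Max L \<in> L" using fin bL by (intro Max_in) auto
    consider "i = j" | "i < j" | "j < i" by linarith
    then show ?thesis
    proof cases
      case 1
      have "\<forall>a\<in>?G i. \<forall>b\<in>?G i. \<forall>m\<in>?G i. a < b \<longrightarrow> b < m \<longrightarrow>
        (f m a < f m b \<longrightarrow> f b a = 0) \<and> (f m b < f m a \<longrightarrow> f b a = s b)"
        using "1.prems"(1) by blast
      moreover have "i < Suc (s (Max L))" using ch[of a i u] "1.prems"(3) pa by blast
      then have "i \<in> set [0..<Suc (s (Max L))]" "\<not> (L = {} \<or> \<not> finite L)" using fin bL by (auto simp del: upt_Suc)
      moreover have "at (build s f (?G i)) b v" using bj 1 by simp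
      ultimately have "cls (s b) v u = f b a"
        using "1.IH"[of i u v] ai "1.prems"(2) by blast
      then show ?thesis using pa pb 1 cls_Cons by simp
    next
      case 2
      then have "left_of pa pb" using pa pb left_ofI[of i j "[]"] by simp
      moreover have "(f (Max L) a < f (Max L) b \<longrightarrow> f b a = 0) \<and> (f (Max L) b < f (Max L) a \<longrightarrow> f b a = s b)"
        using "1.prems"(1) aL bL MxL "1.prems"(2) bM by blast
      then have "f b a = 0" using ai(2) bj(2) 2 by simp
      ultimately show ?thesis using cls_left by simp
    next
      case 3
      then have "left_of pb pa" using pa pb left_ofI[of j i "[]"] by simp
      moreover have "(f (Max L) a < f (Max L) b \<longrightarrow> f b a = 0) \<and> (f (Max L) b < f (Max L) a \<longrightarrow> f b a = s b)"
        using "1.prems"(1) aL bL MxL "1.prems"(2) bM by blast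
      then have "f b a = s b" using ai(2) bj(2) 3 by simp
      ultimately show ?thesis using cls_right by simp
    qed
  qed
qed



lemma build_tree:
  assumes v: "valid n s f"
  shows "\<exists>T. s_decreasing n s T \<and> (\<forall>a b. 1 \<le> a \<longrightarrow> a < b \<longrightarrow> b \<le> n \<longrightarrow> tcard s T b a = f b a)"
proof -
  let ?L = "{1..n}"
  let ?T = "build s f ?L"
  have rg: "\<forall>a\<in>?L. \<forall>b\<in>?L. a < b \<longrightarrow> f b a \<le> s b" using v unfolding valid_def by auto
  have p3: "\<forall>a\<in>?L. \<forall>b\<in>?L. \<forall>m\<in>?L. a < b \<longrightarrow> b < m \<longrightarrow>
        (f m a < f m b \<longrightarrow> f b a = 0) \<and> (f m b < f m a \<longrightarrow> f b a = s b)"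
    using v unfolding valid_def by auto
  have lab: "{x. \<exists>p. at ?T x p} = ?L"
  proof
    show "{x. \<exists>p. at ?T x p} \<subseteq> ?L" using at_build_in by blast
    show "?L \<subseteq> {x. \<exists>p. at ?T x p}" using at_build_ex[OF _ rg] by blast
  qed
  have un: "\<forall>x p q. at ?T x p \<longrightarrow> at ?T x q \<longrightarrow> p = q" using at_build_uniq by blast
  have sd: "s_decreasing n s ?T" unfolding s_decreasing_def
    using lab un arity_build decr_build by blast
  have "tcard s ?T b a = f b a" if h: "1 \<le> a" "a < b" "b \<le> n" for a b
  proof -
    have "a \<in> ?L" "b \<in> ?L" using h by auto
    then obtain pa pb where pa: "at ?T a pa" and pb: "at ?T b pb" using lab by blast
    have "addr ?T a = pa" "addr ?T b = pb" using addr_eq un pa pb by blast+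
    then show ?thesis unfolding tcard_cls using cls_build[OF p3 h(2) pa pb] by simp
  qed
  then show ?thesis using sd by blast
qed

definition tam :: "nat \<Rightarrow> (nat \<Rightarrow> nat \<Rightarrow> nat) \<Rightarrow> bool" where
  "tam n f \<longleftrightarrow> (\<forall>a b c. 1 \<le> a \<longrightarrow> a < b \<longrightarrow> b < c \<longrightarrow> c \<le> n \<longrightarrow> f c a \<le> f c b)"

definition fle :: "nat \<Rightarrow> (nat \<Rightarrow> nat \<Rightarrow> nat) \<Rightarrow> (nat \<Rightarrow> nat \<Rightarrow> nat) \<Rightarrow> bool" where
  "fle n f g \<longleftrightarrow> (\<forall>a b. 1 \<le> a \<longrightarrow> a < b \<longrightarrow> b \<le> n \<longrightarrow> f b a \<le> g b a)"

lemma weak_fle: "s_weak_le n s T U \<longleftrightarrow> fle n (tcard s T) (tcard s U)"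
  unfolding s_weak_le_def fle_def by simp

lemma tamari_tam: "s_tamari n s T \<longleftrightarrow> s_decreasing n s T \<and> tam n (tcard s T)"
  unfolding s_tamari_def tam_def by simp

lemma tam_cong: "fle n f g \<Longrightarrow> fle n g f \<Longrightarrow> tam n f \<Longrightarrow> tam n g"
  unfolding fle_def tam_def
  by (metis (no_types, opaque_lifting) le_antisym le_trans less_trans order.strict_implies_order)

lemma min_valid:
  assumes "valid n s f1" "valid n s f2" "tam n f1" "tam n f2"
  shows "valid n s (\<lambda>b a. min (f1 b a) (f2 b a))" and "tam n (\<lambda>b a. min (f1 b a) (f2 b a))"
proof -
  show "tam n (\<lambda>b a. min (f1 b a) (f2 b a))"
    using assms(3,4) unfolding tam_def by (meson min.mono)
  then have t: "\<And>a b m. 1 \<le> a \<Longrightarrow> a < b \<Longrightarrow> b < m \<Longrightarrow> m \<le> n \<Longrightarrow>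
      min (f1 m a) (f2 m a) \<le> min (f1 m b) (f2 m b)" unfolding tam_def by blast
  show "valid n s (\<lambda>b a. min (f1 b a) (f2 b a))"
    unfolding valid_def
  proof (intro conjI allI impI)
    fix a b assume "1 \<le> a" "a < b" "b \<le> n"
    then show "min (f1 b a) (f2 b a) \<le> s b" using assms(1) unfolding valid_def by (meson min.coboundedI1)
  next
    fix a b m assume h: "1 \<le> a" "a < b" "b < m" "m \<le> n"
      "min (f1 m a) (f2 m a) < min (f1 m b) (f2 m b)"
    show "min (f1 b a) (f2 b a) = 0"
    proof (cases "f1 m a \<le> f2 m a")
      case True
      then have "f1 m a < f1 m b" using h(5) by linarith
      then have "f1 b a = 0" using assms(1) h unfolding valid_def by blast
      then show ?thesis by simp
    next
      case False
      then have "f2 m a < f2 m b" using h(5) by linarith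
      then have "f2 b a = 0" using assms(2) h unfolding valid_def by blast
      then show ?thesis by simp
    qed
  next
    fix a b m assume h: "1 \<le> a" "a < b" "b < m" "m \<le> n"
      "min (f1 m b) (f2 m b) < min (f1 m a) (f2 m a)"
    then show "min (f1 b a) (f2 b a) = s b" using t[OF h(1-4)] by linarith
  qed
qed

lemma inf_family:
  assumes g0: "g0 \<in> F" and FV: "\<And>f. f \<in> F \<Longrightarrow> valid n s f \<and> tam n f"
    and h_def: "h = (\<lambda>b a. LEAST k. \<exists>f\<in>F. f b a = k)"
  shows "valid n s h" "tam n h" "\<And>f. f \<in> F \<Longrightarrow> fle n h f" "\<And>b a. \<exists>f\<in>F. f b a = h b a"
proof -
  have ex: "\<exists>f\<in>F. f b a = h b a" for b a
  proof -
    have "\<exists>k. \<exists>f\<in>F. f b a = k" using g0 by blast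
    then show ?thesis unfolding h_def by (rule LeastI_ex)
  qed
  have lo: "h b a \<le> f b a" if "f \<in> F" for f b a
    unfolding h_def using that by (intro Least_le) blast
  show "\<And>b a. \<exists>f\<in>F. f b a = h b a" using ex .
  show "\<And>f. f \<in> F \<Longrightarrow> fle n h f" unfolding fle_def using lo by blast
  show "tam n h" unfolding tam_def
  proof (intro allI impI)
    fix a b c assume h: "1 \<le> a" "a < b" "b < c" "c \<le> n"
    obtain f where f: "f \<in> F" "f c b = h c b" using ex by blast
    have "f c a \<le> f c b" using FV[OF f(1)] h unfolding tam_def by blast
    then show "h c a \<le> h c b" using lo[OF f(1), of c a] f(2) by simp
  qed
  show "valid n s h" unfolding valid_def
  proof (intro conjI allI impI)
    fix a b assume h: "1 \<le> a" "a < b" "b \<le> n"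
    obtain f where f: "f \<in> F" "f b a = h b a" using ex by blast
    then show "h b a \<le> s b" using FV[OF f(1)] h unfolding valid_def by metis
  next
    fix a b m assume h: "1 \<le> a" "a < b" "b < m" "m \<le> n" "h m a < h m b"
    obtain f where f: "f \<in> F" "f m a = h m a" using ex by blast
    have "f m a < f m b" using lo[OF f(1), of m b] f(2) h(5) by simp
    then have "f b a = 0" using FV[OF f(1)] h unfolding valid_def by blast
    then show "h b a = 0" using lo[OF f(1), of b a] by simp
  next
    fix a b m assume h: "1 \<le> a" "a < b" "b < m" "m \<le> n" "h m b < h m a"
    obtain f where f: "f \<in> F" "f m b = h m b" using ex by blast
    have "f m a \<le> f m b" using FV[OF f(1)] h unfolding tam_def by blast
    then have False using lo[OF f(1), of m a] f(2) h(5) by simp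
    then show "h b a = s b" by simp
  qed
qed

definition proj :: "(nat \<Rightarrow> nat \<Rightarrow> nat) \<Rightarrow> nat \<Rightarrow> nat \<Rightarrow> nat" where
  "proj u c a = Min ((\<lambda>b. u c b) ` {a..<c})"

lemma proj_props:
  assumes v: "valid n s u"
  shows "valid n s (proj u)" "tam n (proj u)" "fle n (proj u) u"
    "\<And>g. tam n g \<Longrightarrow> fle n g u \<Longrightarrow> fle n g (proj u)"
proof -
  have le: "proj u c a \<le> u c b" if "a \<le> b" "b < c" for a b c
    unfolding proj_def using that by (intro Min_le) auto
  have inn: "\<exists>b. a \<le> b \<and> b < c \<and> proj u c a = u c b" if "a < c" for a c
  proof -
    have "proj u c a \<in> (\<lambda>b. u c b) ` {a..<c}" unfolding proj_def using that by (intro Min_in) auto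
    then show ?thesis by auto
  qed
  show fl: "fle n (proj u) u" unfolding fle_def using le by auto
  show tm: "tam n (proj u)" unfolding tam_def
  proof (intro allI impI)
    fix a b c assume h: "1 \<le> a" "a < b" "b < c" "c \<le> n"
    obtain x where x: "b \<le> x" "x < c" "proj u c b = u c x" using inn h by blast
    then show "proj u c a \<le> proj u c b" using le[of a x c] h by simp
  qed
  show "\<And>g. tam n g \<Longrightarrow> fle n g u \<Longrightarrow> fle n g (proj u)"
  proof -
    fix g assume g: "tam n g" "fle n g u"
    show "fle n g (proj u)" unfolding fle_def
    proof (intro allI impI)
      fix a c assume h: "1 \<le> a" "a < c" "c \<le> n"
      obtain x where x: "a \<le> x" "x < c" "proj u c a = u c x" using inn h by blast
      have "g c a \<le> g c x"
      proof (cases "a = x")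
        case False then show ?thesis using g(1) h x unfolding tam_def by simp
      qed simp
      also have "\<dots> \<le> u c x" using g(2) h x unfolding fle_def by simp
      finally show "g c a \<le> proj u c a" using x by simp
    qed
  qed
  show "valid n s (proj u)" unfolding valid_def
  proof (intro conjI allI impI)
    fix a b assume h: "1 \<le> a" "a < b" "b \<le> n"
    have "u b a \<le> s b" using v h unfolding valid_def by blast
    moreover have "proj u b a \<le> u b a" using le[of a a b] h by simp
    ultimately show "proj u b a \<le> s b" by simp
  next
    fix a b m assume h: "1 \<le> a" "a < b" "b < m" "m \<le> n" "proj u m a < proj u m b"
    have "a < m" using h by simp
    then obtain x where x: "a \<le> x" "x < m" "proj u m a = u m x" using inn by blast
    have xb: "x < b"
    proof (rule ccontr)
      assume "\<not> x < b"
      then have "proj u m b \<le> u m x" using le[of b x m] x by simp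
      then show False using h(5) x(3) by simp
    qed
    have "u m x < u m b" using le[of b b m] h x by simp
    moreover have "1 \<le> x" using h x by simp
    ultimately have "u b x = 0" using v h xb unfolding valid_def by blast
    then show "proj u b a = 0" using le[of a x b] x xb by simp
  next
    fix a b m assume h: "1 \<le> a" "a < b" "b < m" "m \<le> n" "proj u m b < proj u m a"
    then show "proj u b a = s b" using tm unfolding tam_def by (meson leD)
  qed
qed

lemma fle_trans: "fle n f g \<Longrightarrow> fle n g h \<Longrightarrow> fle n f h"
  unfolding fle_def by (meson le_trans)

lemma fle_eq: "(\<forall>a b. 1 \<le> a \<longrightarrow> a < b \<longrightarrow> b \<le> n \<longrightarrow> f b a = g b a) \<Longrightarrow> fle n f g \<and> fle n g f"
  unfolding fle_def by simp

theorem theorem2p2: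
  fixes n :: nat and s :: "nat \<Rightarrow> nat" and T T' :: tr
  assumes "s_tamari n s T" and "s_tamari n s T'"
  shows "(\<exists>J. is_s_join n s T T' J) \<and> (\<forall>J. is_s_join n s T T' J \<longrightarrow> s_tamari n s J) \<and>
         (\<exists>M. is_s_meet n s T T' M) \<and> (\<forall>M. is_s_meet n s T T' M \<longrightarrow> s_tamari n s M)"
proof -
  let ?f1 = "tcard s T" and ?f2 = "tcard s T'"
  have d1: "s_decreasing n s T" and t1: "tam n ?f1" using assms(1) tamari_tam by auto
  have d2: "s_decreasing n s T'" and t2: "tam n ?f2" using assms(2) tamari_tam by auto
  have v1: "valid n s ?f1" using tree_valid[OF d1] .
  have v2: "valid n s ?f2" using tree_valid[OF d2] .
  let ?g = "\<lambda>b a. min (?f1 b a) (?f2 b a)"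
  have gv: "valid n s ?g" and gt: "tam n ?g" using min_valid[OF v1 v2 t1 t2] by auto
  obtain M where M: "s_decreasing n s M" and Mc: "\<forall>a b. 1 \<le> a \<longrightarrow> a < b \<longrightarrow> b \<le> n \<longrightarrow> tcard s M b a = ?g b a"
    using build_tree[OF gv] by blast
  have Mg: "fle n (tcard s M) ?g" "fle n ?g (tcard s M)" using fle_eq[OF Mc] by auto
  have g1: "fle n ?g ?f1" and g2: "fle n ?g ?f2" unfolding fle_def by auto
  have Mmeet: "is_s_meet n s T T' M" unfolding is_s_meet_def weak_fle
  proof (intro conjI allI impI)
    show "s_decreasing n s M" by (rule M)
    show "fle n (tcard s M) ?f1" using fle_trans[OF Mg(1) g1] .
    show "fle n (tcard s M) ?f2" using fle_trans[OF Mg(1) g2] .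
    fix U assume "s_decreasing n s U" "fle n (tcard s U) ?f1" "fle n (tcard s U) ?f2"
    then have "fle n (tcard s U) ?g" unfolding fle_def by simp
    then show "fle n (tcard s U) (tcard s M)" using fle_trans Mg(2) by blast
  qed
  have meetT: "s_tamari n s M'" if "is_s_meet n s T T' M'" for M'
  proof -
    have a: "fle n (tcard s M') (tcard s M)" using Mmeet that unfolding is_s_meet_def weak_fle by blast
    have b: "fle n (tcard s M) (tcard s M')" using Mmeet that unfolding is_s_meet_def weak_fle by blast
    have "tam n (tcard s M)" using tam_cong[OF Mg(2) Mg(1) gt] .
    then have "tam n (tcard s M')" using tam_cong[OF b a] by blast
    then show ?thesis using that tamari_tam unfolding is_s_meet_def by blast
  qed
  define F where "F = {f. valid n s f \<and> tam n f \<and> fle n ?f1 f \<and> fle n ?f2 f}"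
  let ?g0 = "\<lambda>(b::nat) (a::nat). s b"
  have g0F: "?g0 \<in> F" unfolding F_def
  proof (intro CollectI conjI)
    show "valid n s ?g0" unfolding valid_def by simp
    show "tam n ?g0" unfolding tam_def by simp
    show "fle n ?f1 ?g0" using v1 unfolding valid_def fle_def by blast
    show "fle n ?f2 ?g0" using v2 unfolding valid_def fle_def by blast
  qed
  have FV: "\<And>f. f \<in> F \<Longrightarrow> valid n s f \<and> tam n f" unfolding F_def by blast
  define h where "h = (\<lambda>b a. LEAST k. \<exists>f\<in>F. f b a = k)"
  note I = inf_family[OF g0F FV h_def]
  obtain J where J: "s_decreasing n s J" and Jc: "\<forall>a b. 1 \<le> a \<longrightarrow> a < b \<longrightarrow> b \<le> n \<longrightarrow> tcard s J b a = h b a"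
    using build_tree[OF I(1)] by blast
  have Jh: "fle n (tcard s J) h" "fle n h (tcard s J)" using fle_eq[OF Jc] by auto
  have h1: "fle n ?f1 h" unfolding fle_def
  proof (intro allI impI)
    fix a b assume ab: "1 \<le> a" "a < b" "b \<le> n"
    obtain f where f: "f \<in> F" "f b a = h b a" using I(4) by blast
    then have "fle n ?f1 f" unfolding F_def by blast
    then have "?f1 b a \<le> f b a" using ab unfolding fle_def by blast
    then show "?f1 b a \<le> h b a" using f(2) by simp
  qed
  have h2: "fle n ?f2 h" unfolding fle_def
  proof (intro allI impI)
    fix a b assume ab: "1 \<le> a" "a < b" "b \<le> n"
    obtain f where f: "f \<in> F" "f b a = h b a" using I(4) by blast
    then have "fle n ?f2 f" unfolding F_def by blast
    then have "?f2 b a \<le> f b a" using ab unfolding fle_def by blast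
    then show "?f2 b a \<le> h b a" using f(2) by simp
  qed
  have Jjoin: "is_s_join n s T T' J" unfolding is_s_join_def weak_fle
  proof (intro conjI allI impI)
    show "s_decreasing n s J" by (rule J)
    show "fle n ?f1 (tcard s J)" using fle_trans[OF h1 Jh(2)] .
    show "fle n ?f2 (tcard s J)" using fle_trans[OF h2 Jh(2)] .
    fix U assume U: "s_decreasing n s U" "fle n ?f1 (tcard s U)" "fle n ?f2 (tcard s U)"
    note P = proj_props[OF tree_valid[OF U(1)]]
    have "proj (tcard s U) \<in> F" unfolding F_def using P(1,2) P(4)[OF t1 U(2)] P(4)[OF t2 U(3)] by blast
    then have "fle n h (proj (tcard s U))" using I(3) by blast
    then have "fle n h (tcard s U)" using fle_trans P(3) by blast
    then show "fle n (tcard s J) (tcard s U)" using fle_trans Jh(1) by blast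
  qed
  have joinT: "s_tamari n s J'" if "is_s_join n s T T' J'" for J'
  proof -
    have a: "fle n (tcard s J') (tcard s J)" using Jjoin that unfolding is_s_join_def weak_fle by blast
    have b: "fle n (tcard s J) (tcard s J')" using Jjoin that unfolding is_s_join_def weak_fle by blast
    have "tam n (tcard s J)" using tam_cong[OF Jh(2) Jh(1) I(2)] .
    then have "tam n (tcard s J')" using tam_cong[OF b a] by blast
    then show ?thesis using that tamari_tam unfolding is_s_join_def by blast
  qed
  show ?thesis using Mmeet meetT Jjoin joinT by blast
qed

end
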